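(* For every integer $n\ge1$ and every $u\in V$, $\Pr(E_{4u})<\dfrac{3}{\ln(n+1)}$.
   Context: For an integer $n\ge1$, the $n$-octahedral graph $G'_n=(V,E')$ is the undirected graph with vertex set $V=\{u\in\mathbb{Z}^3:|u_1|+|u_2|+|u_3|=n\}$ and edge set $E'=\{\{v,w\}\subset V: v\neq w,\ |v_i-w_i|\le 1 \text{ for all } i=1,2,3\}$. For $u,v\in V$, $d_{uv}$ denotes the shortest-path distance in $G'_n$, and $Z_u=\left(\sum_{w\in V\setminus\{u\}} d_{uw}^{-2}\right)^{-1}$. The OSW random graph $G_n=(V,E)$ is the directed graph in which, for every $\{u,v\}\in E'$, both $(u,v),(v,u)\in E$, and in addition each vertex $u\in V$, independently of the others, chooses one vertex $v\in V\setminus\{u\}$ with probability $Z_u d_{uv}^{-2}$ and the long-range edge $(u,v)$ is added; $C_{uv}$ denotes the event that $u$ chooses $v$. For an ordered pair $(x,y)$ of distinct vertices, say $(x,y)$ is of type $s$ if $\{x,y\}\in E'$, and of type $w$ if $d_{xy}\ge2$ and $C_{xy}$ occurs. A C3 rooted at $u$ of type $(t_1,t_2,t_3)\in\{s,w\}^3$ is a triple $(u,a,b)$ of pairwise distinct vertices such that $(u,a)$ is of type $t_1$, $(a,b)$ is of type $t_2$ and $(b,u)$ is of type $t_3$. $E_{4u}$ is the event that there exists a C3 rooted at $u$ of type $(w,s,s)$. *)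

theory Defs
  imports "HOL-Probability.Probability"
begin

type_synonym pt = "int \<times> int \<times> int"

definition octV :: "nat \<Rightarrow> pt set" where
  "octV n = {(x1, x2, x3). \<bar>x1\<bar> + \<bar>x2\<bar> + \<bar>x3\<bar> = int n}"

definition octAdj :: "nat \<Rightarrow> pt \<Rightarrow> pt \<Rightarrow> bool" where
  "octAdj n v w \<longleftrightarrow> v \<in> octV n \<and> w \<in> octV n \<and> v \<noteq> w \<and>
     \<bar>fst v - fst w\<bar> \<le> 1 \<and> \<bar>fst (snd v) - fst (snd w)\<bar> \<le> 1 \<and>
     \<bar>snd (snd v) - snd (snd w)\<bar> \<le> 1"

definition octE :: "nat \<Rightarrow> pt rel" where
  "octE n = {(v, w). octAdj n v w}"

definition octDist :: "nat \<Rightarrow> pt \<Rightarrow> pt \<Rightarrow> nat" where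
  "octDist n u v = (LEAST k. (u, v) \<in> octE n ^^ k)"

definition octZ :: "nat \<Rightarrow> pt \<Rightarrow> real" where
  "octZ n u = inverse (\<Sum>w \<in> octV n - {u}. 1 / (real (octDist n u w))\<^sup>2)"

definition choice_pmf :: "nat \<Rightarrow> pt \<Rightarrow> pt pmf" where
  "choice_pmf n u = embed_pmf (\<lambda>v. if v \<in> octV n - {u}
       then octZ n u / (real (octDist n u v))\<^sup>2 else 0)"

text \<open>Joint law of all choices (independent over vertices); an outcome c
  is the choice function, C_uv is the event c u = v.\<close>
definition OSW_pmf :: "nat \<Rightarrow> (pt \<Rightarrow> pt) pmf" where
  "OSW_pmf n = Pi_pmf (octV n) (0, 0, 0) (choice_pmf n)"

definition type_s :: "nat \<Rightarrow> pt \<Rightarrow> pt \<Rightarrow> bool" where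
  "type_s n x y \<longleftrightarrow> octAdj n x y"

definition type_w :: "nat \<Rightarrow> (pt \<Rightarrow> pt) \<Rightarrow> pt \<Rightarrow> pt \<Rightarrow> bool" where
  "type_w n c x y \<longleftrightarrow> x \<in> octV n \<and> y \<in> octV n \<and> x \<noteq> y \<and>
      octDist n x y \<ge> 2 \<and> c x = y"

definition E4 :: "nat \<Rightarrow> pt \<Rightarrow> (pt \<Rightarrow> pt) set" where
  "E4 n u = {c. \<exists>a b. u \<noteq> a \<and> a \<noteq> b \<and> b \<noteq> u \<and>
      type_w n c u a \<and> type_s n a b \<and> type_s n b u}"

end

theory Submission
  imports Defs "HOL-Analysis.Harmonic_Numbers"
begin

definition l1 :: "pt \<Rightarrow> int" where
  "l1 x = \<bar>fst x\<bar> + \<bar>fst (snd x)\<bar> + \<bar>snd (snd x)\<bar>"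

definition cheb :: "pt \<Rightarrow> pt \<Rightarrow> int" where
  "cheb x y = max \<bar>fst x - fst y\<bar> (max \<bar>fst (snd x) - fst (snd y)\<bar> \<bar>snd (snd x) - snd (snd y)\<bar>)"

lemma octV_iff: "x \<in> octV n \<longleftrightarrow> l1 x = int n"
  by (cases x) (auto simp: octV_def l1_def)

lemma octAdj_iff: "octAdj n v w \<longleftrightarrow> v \<in> octV n \<and> w \<in> octV n \<and> v \<noteq> w \<and> cheb v w \<le> 1"
  by (auto simp: octAdj_def cheb_def)

lemma finite_octV: "finite (octV n)"
proof -
  have "octV n \<subseteq> {-int n..int n} \<times> {-int n..int n} \<times> {-int n..int n}"
    by (auto simp: octV_def)
  then show ?thesis by (rule finite_subset) auto
qed

lemma cheb_triangle: "cheb x z \<le> cheb x y + cheb y z"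
proof -
  have a: "\<bar>fst x - fst z\<bar> \<le> \<bar>fst x - fst y\<bar> + \<bar>fst y - fst z\<bar>" by arith
  have b: "\<bar>fst (snd x) - fst (snd z)\<bar> \<le> \<bar>fst (snd x) - fst (snd y)\<bar> + \<bar>fst (snd y) - fst (snd z)\<bar>" by arith
  have c: "\<bar>snd (snd x) - snd (snd z)\<bar> \<le> \<bar>snd (snd x) - snd (snd y)\<bar> + \<bar>snd (snd y) - snd (snd z)\<bar>" by arith
  show ?thesis unfolding cheb_def using a b c
    by (smt (verit) max.cobounded1 max.cobounded2 max.bounded_iff)
qed

lemma dist_le: "(u,w) \<in> octE n ^^ k \<Longrightarrow> octDist n u w \<le> k"
  unfolding octDist_def by (rule Least_le)

lemma dist_pos:
  assumes "(u,w) \<in> octE n ^^ k" "u \<noteq> w"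
  shows "0 < octDist n u w"
proof -
  have "(u,w) \<in> octE n ^^ (octDist n u w)"
    unfolding octDist_def by (rule LeastI[of _ k]) (rule assms(1))
  then show ?thesis using assms(2) by (cases "octDist n u w") auto
qed

lemma pmf_choice:
  assumes pos: "0 < (\<Sum>w\<in>octV n - {u}. 1 / (real (octDist n u w))\<^sup>2)"
  shows "pmf (choice_pmf n u) v =
     (if v \<in> octV n - {u} then octZ n u / (real (octDist n u v))\<^sup>2 else 0)"
proof -
  define f where "f = (\<lambda>v. if v \<in> octV n - {u} then octZ n u / (real (octDist n u v))\<^sup>2 else 0)"
  have Z: "0 \<le> octZ n u" using pos by (simp add: octZ_def)
  have nn: "\<And>x. 0 \<le> f x" using Z by (auto simp: f_def)
  have "(\<Sum>v\<in>octV n - {u}. f v) = (\<Sum>v\<in>octV n - {u}. octZ n u * (1 / (real (octDist n u v))\<^sup>2))"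
    by (rule sum.cong) (auto simp: f_def)
  also have "\<dots> = octZ n u * (\<Sum>w\<in>octV n - {u}. 1 / (real (octDist n u w))\<^sup>2)"
    by (simp add: sum_distrib_left)
  also have "\<dots> = 1" using pos by (simp add: octZ_def)
  finally have s1: "(\<Sum>v\<in>octV n - {u}. f v) = 1" .
  have "(\<integral>\<^sup>+x. ennreal (f x) \<partial>count_space UNIV) = (\<Sum>x\<in>octV n - {u}. ennreal (f x))"
    by (rule nn_integral_count_space') (auto simp: f_def finite_octV)
  also have "\<dots> = ennreal (\<Sum>x\<in>octV n - {u}. f x)" using nn by simp
  also have "\<dots> = 1" using s1 by simp
  finally have prob: "(\<integral>\<^sup>+x. ennreal (f x) \<partial>count_space UNIV) = 1" .
  have "choice_pmf n u = embed_pmf f" unfolding choice_pmf_def f_def by simp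
  then show ?thesis using pmf_embed_pmf[of f, OF nn prob] by (simp add: f_def)
qed


definition rot :: "nat \<Rightarrow> int \<times> int \<Rightarrow> int \<times> int" where
  "rot r p = (if r = 0 then p else if r = 1 then (- snd p, fst p)
     else if r = 2 then (- fst p, - snd p) else (snd p, - fst p))"

definition pt2 :: "nat \<times> nat \<times> nat \<Rightarrow> int \<times> int" where
  "pt2 i = rot (fst i) (int (fst (snd i)) - int (snd (snd i)), int (snd (snd i)))"

definition idx :: "nat \<Rightarrow> (nat \<times> nat \<times> nat) set" where
  "idx K = {0..<4} \<times> Sigma {1..K} (\<lambda>k. {..<k})"

lemma pt2_l1: "i \<in> idx K \<Longrightarrow> \<bar>fst (pt2 i)\<bar> + \<bar>snd (pt2 i)\<bar> = int (fst (snd i))"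
  by (auto simp: idx_def pt2_def rot_def)

lemma pt2_inj: "inj_on pt2 (idx K)"
  by (auto simp: inj_on_def idx_def pt2_def rot_def split: if_splits)

lemma finite_idx: "finite (idx K)"
  by (simp add: idx_def)

lemma idx_sum: "(\<Sum>i\<in>idx K. 1 / (real (fst (snd i)))\<^sup>2) = 4 * harm K"
proof -
  have "(\<Sum>i\<in>idx K. 1 / (real (fst (snd i)))\<^sup>2) =
      (\<Sum>r\<in>{0..<4::nat}. \<Sum>kj\<in>Sigma {1..K} (\<lambda>k. {..<k}). 1 / (real (fst kj))\<^sup>2)"
    unfolding idx_def sum.cartesian_product by (simp add: case_prod_unfold)
  also have "\<dots> = 4 * (\<Sum>kj\<in>Sigma {1..K} (\<lambda>k. {..<k}). 1 / (real (fst kj))\<^sup>2)"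
    by simp
  also have "(\<Sum>kj\<in>Sigma {1..K} (\<lambda>k. {..<k}). 1 / (real (fst kj))\<^sup>2)
      = (\<Sum>k\<in>{1..K}. \<Sum>j<k. 1 / (real k)\<^sup>2)"
    by (subst sum.Sigma) (auto simp: case_prod_unfold)
  also have "\<dots> = (\<Sum>k\<in>{1..K}. inverse (real k))"
    by (rule sum.cong) (auto simp: power2_eq_square field_simps)
  also have "\<dots> = harm K" by (simp add: harm_def)
  finally show ?thesis .
qed

lemma inv_sq_mono:
  fixes d k :: nat
  assumes "0 < d" "d \<le> k"
  shows "1 / (real k)\<^sup>2 \<le> 1 / (real d)\<^sup>2"
  using assms by (intro divide_left_mono power_mono) auto


lemma aux3: "\<bar>X - X'\<bar> \<le> (\<alpha>::int) \<Longrightarrow> \<bar>Y - Y'\<bar> \<le> \<beta> \<Longrightarrow> \<alpha> + \<beta> = 1 \<Longrightarrow>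
   \<bar>(N - X - Y) - (N - X' - Y')\<bar> \<le> 1"
  by arith

lemma aux1: "\<bar>a - a'\<bar> + \<bar>b - b'\<bar> = (1::int) \<Longrightarrow> \<bar>a - a'\<bar> \<le> 1"
  by arith

lemma aux2: "\<bar>a - a'\<bar> + \<bar>b - b'\<bar> = (1::int) \<Longrightarrow> \<bar>b - b'\<bar> \<le> 1"
  by arith

lemma core:
  fixes \<sigma> :: "pt \<Rightarrow> pt"
  assumes inj: "inj \<sigma>" and surj: "surj \<sigma>"
    and l1\<sigma>: "\<And>x. l1 (\<sigma> x) = l1 x" and cheb\<sigma>: "\<And>x y. cheb (\<sigma> x) (\<sigma> y) = cheb x y"
    and n7: "n \<ge> 7" and u: "u = \<sigma> (p0, q0, t0)" and u'V: "\<bar>p0\<bar> + \<bar>q0\<bar> + \<bar>t0\<bar> = int n"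
    and t0: "3 * t0 \<ge> int n"
  shows "measure_pmf.prob (OSW_pmf n) (E4 n u) < 3 / ln (real n + 1)"
proof -
  have t3: "t0 \<ge> 3" using t0 n7 by linarith
  have t0e: "t0 = int n - \<bar>p0\<bar> - \<bar>q0\<bar>" using u'V t3 by simp
  define K where "K = nat t0"
  have K: "int K = t0" using t3 by (simp add: K_def)
  define G where "G = (\<lambda>(a,b). \<sigma> (p0 + a, q0 + b, int n - \<bar>p0 + a\<bar> - \<bar>q0 + b\<bar>))"
  have G0: "G (0,0) = u" using u t0e by (simp add: G_def)
  have uV: "u \<in> octV n" using u u'V l1\<sigma>[of "(p0,q0,t0)"] by (simp add: octV_iff) (simp add: l1_def)
  have GV: "G (a,b) \<in> octV n" if "\<bar>a\<bar> + \<bar>b\<bar> \<le> t0" for a b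
  proof -
    have "int n - \<bar>p0 + a\<bar> - \<bar>q0 + b\<bar> \<ge> 0" using that t0e by arith
    then show ?thesis unfolding G_def octV_iff by (simp add: l1\<sigma>) (simp add: l1_def)
  qed
  have Ginj: "G x = G y \<Longrightarrow> x = y" for x y
    using inj by (cases x, cases y) (auto simp: G_def inj_eq)
  have Gadj: "octAdj n (G (a',b')) (G (a,b))"
    if "\<bar>a\<bar>+\<bar>b\<bar> \<le> t0" "\<bar>a'\<bar>+\<bar>b'\<bar> \<le> t0" "\<bar>a-a'\<bar> + \<bar>b-b'\<bar> = 1" for a b a' b'
  proof -
    have "G (a',b') \<noteq> G (a,b)" using that(3) Ginj by force
    moreover have "cheb (G (a',b')) (G (a,b)) \<le> 1"
    proof -
      have e1: "\<bar>\<bar>p0 + a'\<bar> - \<bar>p0 + a\<bar>\<bar> \<le> \<bar>a - a'\<bar>"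
        using abs_triangle_ineq3[of "p0 + a'" "p0 + a"] by (simp add: abs_minus_commute)
      have e2: "\<bar>\<bar>q0 + b'\<bar> - \<bar>q0 + b\<bar>\<bar> \<le> \<bar>b - b'\<bar>"
        using abs_triangle_ineq3[of "q0 + b'" "q0 + b"] by (simp add: abs_minus_commute)
      have c3: "\<bar>(int n - \<bar>p0 + a'\<bar> - \<bar>q0 + b'\<bar>) - (int n - \<bar>p0 + a\<bar> - \<bar>q0 + b\<bar>)\<bar> \<le> 1"
        by (rule aux3[OF e1 e2 that(3)])
      have c1: "\<bar>p0 + a' - (p0 + a)\<bar> \<le> 1" using aux1[OF that(3)] by (simp add: abs_minus_commute)
      have c2: "\<bar>q0 + b' - (q0 + b)\<bar> \<le> 1" using aux2[OF that(3)] by (simp add: abs_minus_commute)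
      have "cheb (G (a',b')) (G (a,b)) = cheb (p0 + a', q0 + b', int n - \<bar>p0 + a'\<bar> - \<bar>q0 + b'\<bar>)
          (p0 + a, q0 + b, int n - \<bar>p0 + a\<bar> - \<bar>q0 + b\<bar>)"
        unfolding G_def by (simp only: case_prod_conv cheb\<sigma>)
      also have "\<dots> \<le> 1" unfolding cheb_def fst_conv snd_conv
        by (intro max.boundedI c1 c2 c3)
      finally show ?thesis .
    qed
    ultimately show ?thesis using GV that by (simp add: octAdj_iff)
  qed
  have path: "\<And>a b. \<bar>a\<bar>+\<bar>b\<bar> = int k \<Longrightarrow> k \<le> K \<Longrightarrow> (u, G (a,b)) \<in> octE n ^^ k" for k
  proof (induction k)
    case 0 then have "a = 0" "b = 0" by auto
    then show ?case using G0 by simp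
  next
    case (Suc k)
    define a' where "a' = (if a > 0 then a - 1 else if a < 0 then a + 1 else a)"
    define b' where "b' = (if a \<noteq> 0 then b else if b > 0 then b - 1 else b + 1)"
    have 1: "\<bar>a'\<bar>+\<bar>b'\<bar> = int k" using Suc.prems(1) by (auto simp: a'_def b'_def)
    have 2: "\<bar>a-a'\<bar> + \<bar>b-b'\<bar> = 1" using Suc.prems(1) by (auto simp: a'_def b'_def)
    have "(u, G (a',b')) \<in> octE n ^^ k" using Suc.IH[OF 1] Suc.prems(2) by simp
    moreover have "(G (a',b'), G (a,b)) \<in> octE n"
      using Gadj[OF _ _ 2] Suc.prems 1 K by (simp add: octE_def)
    ultimately show ?case by auto
  qed
  define S where "S = (\<Sum>w\<in>octV n - {u}. 1 / (real (octDist n u w))\<^sup>2)"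
  define W where "W = (\<lambda>i. G (pt2 i))"
  have Wprop: "W i \<in> octV n - {u} \<and> 0 < octDist n u (W i) \<and> octDist n u (W i) \<le> fst (snd i)"
    if "i \<in> idx K" for i
  proof -
    obtain a b where ab: "pt2 i = (a,b)" by (cases "pt2 i")
    have l: "\<bar>a\<bar>+\<bar>b\<bar> = int (fst (snd i))" using pt2_l1[OF that] ab by simp
    have kK: "fst (snd i) \<le> K" "fst (snd i) \<ge> 1" using that by (auto simp: idx_def)
    have inV: "W i \<in> octV n" using GV[of a b] l kK K by (simp add: W_def ab)
    have ne: "W i \<noteq> u"
    proof
      assume "W i = u"
      then have "G (a,b) = G (0,0)" using G0 by (simp add: W_def ab)
      then have "(a,b) = (0,0)" by (rule Ginj)
      then show False using l kK by simp
    qed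
    have p: "(u, W i) \<in> octE n ^^ fst (snd i)" using path[OF l kK(1)] by (simp add: W_def ab)
    show ?thesis using inV ne dist_le[OF p] dist_pos[OF p] ne by auto
  qed
  have Winj: "inj_on W (idx K)"
    using pt2_inj Ginj unfolding W_def inj_on_def by metis
  have S_ge: "4 * harm K \<le> S"
  proof -
    have "4 * harm K = (\<Sum>i\<in>idx K. 1 / (real (fst (snd i)))\<^sup>2)" by (simp add: idx_sum)
    also have "\<dots> \<le> (\<Sum>i\<in>idx K. 1 / (real (octDist n u (W i)))\<^sup>2)"
      by (rule sum_mono) (use Wprop inv_sq_mono in blast)
    also have "\<dots> = (\<Sum>w\<in>W ` idx K. 1 / (real (octDist n u w))\<^sup>2)"
      by (simp add: sum.reindex[OF Winj])
    also have "\<dots> \<le> S" unfolding S_def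
    proof (rule sum_mono2)
      show "W ` idx K \<subseteq> octV n - {u}" using Wprop by blast
    qed (simp_all add: finite_octV)
    finally show ?thesis .
  qed
  have lnpos: "0 < ln (real n + 1)" using n7 by simp
  have "3 * K \<ge> n" using t0 K by linarith
  then have sq: "real n + 1 < (real K + 1)^2"
  proof -
    assume h: "3 * K \<ge> n"
    have h1: "real n \<le> 3 * real K" using h by (metis of_nat_le_iff of_nat_mult of_nat_numeral)
    have "K \<ge> 3" using h n7 by linarith
    then have h2: "real K \<ge> 3" by simp
    have h3: "3 * real K \<le> real K * real K" using h2 by (intro mult_right_mono) auto
    have eq: "(real K + 1)^2 = real K * real K + 2 * real K + 1" by (simp add: power2_eq_square algebra_simps)
    show ?thesis using h1 h2 h3 eq by linarith
  qed
  have "ln (real n + 1) < ln ((real K + 1)^2)" using sq lnpos by (subst ln_less_cancel_iff) auto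
  also have "\<dots> = 2 * ln (real K + 1)" by (simp add: ln_realpow)
  also have "\<dots> \<le> 2 * harm K" using ln_le_harm[of K] by simp
  finally have S2: "2 * ln (real n + 1) < S" using S_ge by linarith
  have Spos: "0 < S" using S2 lnpos by linarith
  define A where "A = {a \<in> octV n. a \<noteq> u \<and> 2 \<le> octDist n u a \<and> (\<exists>b. octAdj n a b \<and> octAdj n b u)}"
  have finA: "finite A" by (rule finite_subset[OF _ finite_octV]) (auto simp: A_def)
  have E4sub: "E4 n u \<subseteq> (\<lambda>c. c u) -` A"
  proof
    fix c assume "c \<in> E4 n u"
    then obtain a b where h: "type_w n c u a" "type_s n a b" "type_s n b u"
      unfolding E4_def by blast
    then have "c u = a" "a \<in> octV n" "a \<noteq> u" "2 \<le> octDist n u a" "octAdj n a b" "octAdj n b u"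
      unfolding type_w_def type_s_def by auto
    then show "c \<in> (\<lambda>c. c u) -` A" unfolding A_def by blast
  qed
  have marg: "map_pmf (\<lambda>c. c u) (OSW_pmf n) = choice_pmf n u"
    using Pi_pmf_component[OF finite_octV, where x=u and dflt="(0,0,0)" and p="choice_pmf n"] uV
    by (simp add: OSW_pmf_def)
  have cardA: "card A \<le> 24"
  proof -
    define B where "B = ({-2..2} \<times> {-2..2} :: (int\<times>int) set) - {(0,0)}"
    have "A \<subseteq> G ` B"
    proof
      fix a assume aA: "a \<in> A"
      then obtain b where ab: "octAdj n a b" "octAdj n b u" and aV: "a \<in> octV n" and ne: "a \<noteq> u"
        by (auto simp: A_def)
      have ch: "cheb a u \<le> 2" using cheb_triangle[where x=a and y=b and z=u] ab by (simp add: octAdj_iff)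
      obtain x where x: "a = \<sigma> x" using surj by (metis surjD)
      obtain x1 x2 x3 where xx: "x = (x1,x2,x3)" by (cases x)
      have "cheb x (p0,q0,t0) \<le> 2" using ch by (simp add: x u cheb\<sigma>)
      hence d: "\<bar>x1-p0\<bar> \<le> 2" "\<bar>x2-q0\<bar> \<le> 2" "\<bar>x3 - t0\<bar> \<le> 2" by (auto simp: cheb_def xx)
      have "l1 x = int n" using aV by (simp add: octV_iff x l1\<sigma>)
      hence x3: "x3 = int n - \<bar>x1\<bar> - \<bar>x2\<bar>" using d(3) t3 by (simp add: l1_def xx)
      have "a = G (x1 - p0, x2 - q0)" by (simp add: G_def x xx x3)
      moreover have "(x1-p0, x2-q0) \<in> B"
      proof -
        have "(x1-p0, x2-q0) \<noteq> (0,0)"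
        proof
          assume "(x1-p0, x2-q0) = (0,0)"
          then have "x = (p0,q0,t0)" using x3 t0e xx by simp
          then show False using ne x u by simp
        qed
        then show ?thesis using d by (simp add: B_def abs_le_iff)
      qed
      ultimately show "a \<in> G ` B" by blast
    qed
    hence "card A \<le> card (G ` B)" by (rule card_mono[OF finite_imageI, rotated]) (simp add: B_def)
    also have "\<dots> \<le> card B" by (rule card_image_le) (simp add: B_def)
    also have "card B = 24" by (simp add: B_def card_cartesian_product)
    finally show ?thesis .
  qed
  have pmfA: "pmf (choice_pmf n u) a \<le> inverse S / 4" if "a \<in> A" for a
  proof -
    have aA: "a \<in> octV n - {u}" "2 \<le> octDist n u a" using that by (auto simp: A_def)
    have "pmf (choice_pmf n u) a = inverse S / (real (octDist n u a))\<^sup>2"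
      using pmf_choice[of n u a] Spos aA by (simp add: S_def octZ_def)
    also have "\<dots> \<le> inverse S / 4"
    proof (rule divide_left_mono)
      have "(2::real)^2 \<le> (real (octDist n u a))\<^sup>2" using aA(2) by (intro power_mono) auto
      then show "4 \<le> (real (octDist n u a))\<^sup>2" by simp
    qed (use Spos aA(2) in auto)
    finally show ?thesis .
  qed
  have "measure_pmf.prob (OSW_pmf n) (E4 n u) \<le> measure_pmf.prob (OSW_pmf n) ((\<lambda>c. c u) -` A)"
    by (rule measure_pmf.finite_measure_mono[OF E4sub]) simp
  also have "\<dots> = measure_pmf.prob (choice_pmf n u) A" by (simp flip: marg)
  also have "\<dots> = (\<Sum>a\<in>A. pmf (choice_pmf n u) a)" by (rule measure_measure_pmf_finite[OF finA])
  also have "\<dots> \<le> (\<Sum>a\<in>A. inverse S / 4)" by (rule sum_mono) (rule pmfA)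
  also have "\<dots> = real (card A) * (inverse S / 4)" by simp
  also have "\<dots> \<le> 24 * (inverse S / 4)" using cardA Spos by (intro mult_right_mono) auto
  also have "\<dots> = 6 / S" by (simp add: field_simps)
  also have "\<dots> < 3 / ln (real n + 1)" using S2 lnpos Spos by (simp add: field_simps)
  finally show ?thesis .
qed


theorem lemma8:
  fixes n :: nat and u :: pt
  assumes "n \<ge> 1" and "u \<in> octV n"
  shows "measure_pmf.prob (OSW_pmf n) (E4 n u) < 3 / ln (real n + 1)"
proof (cases "n \<ge> 7")
  case False
  have "measure_pmf.prob (OSW_pmf n) (E4 n u) \<le> 1" by simp
  also have "1 < 3 / ln (real n + 1)"
  proof -
    have e: "exp 1 \<ge> (2::real)" using exp_ge_add_one_self[of "1::real"] by simp
    have "exp (3::real) = exp 1 * exp 1 * exp 1" by (simp flip: exp_add)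
    also have "\<dots> \<ge> 2 * 2 * 2" using e by (intro mult_mono) auto
    finally have e3: "exp (3::real) \<ge> 8" by simp
    have "real n + 1 < exp 3" using False e3 by simp
    then have "ln (real n + 1) < ln (exp 3)" by (subst ln_less_cancel_iff) auto
    then have l3: "ln (real n + 1) < 3" by simp
    have "0 < ln (real n + 1)" using assms(1) by simp
    with l3 show ?thesis by (simp add: field_simps)
  qed
  finally show ?thesis .
next
  case True
  obtain x y z where u: "u = (x,y,z)" by (cases u)
  have s: "\<bar>x\<bar>+\<bar>y\<bar>+\<bar>z\<bar> = int n" using assms(2) by (simp add: u octV_def)
  consider "3*z \<ge> int n" | "3*(-z) \<ge> int n" | "3*x \<ge> int n" | "3*(-x) \<ge> int n"
    | "3*y \<ge> int n" | "3*(-y) \<ge> int n" using s by arith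
  then show ?thesis
  proof cases

    case 1
    show ?thesis
    proof (rule core[of "id" n u "x" "y" "z"])
      show "inj (id)" by (auto simp: inj_def)
      show "surj (id)" by (rule surjI[where f="id"]) auto
      show "\<And>x. l1 ((id) x) = l1 x" by (auto simp: l1_def split: prod.splits)
      show "\<And>x y. cheb ((id) x) ((id) y) = cheb x y"
        by (auto simp: cheb_def max.assoc max.commute max.left_commute abs_minus_commute split: prod.splits)
    qed (use True 1 s u in \<open>auto\<close>)
  next
    case 2
    show ?thesis
    proof (rule core[of "\<lambda>(a::int,b::int,c::int). (a,b,-c)" n u "x" "y" "-z"])
      show "inj (\<lambda>(a::int,b::int,c::int). (a,b,-c))" by (auto simp: inj_def)
      show "surj (\<lambda>(a::int,b::int,c::int). (a,b,-c))" by (rule surjI[where f="\<lambda>(a::int,b::int,c::int). (a,b,-c)"]) auto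
      show "\<And>x. l1 ((\<lambda>(a::int,b::int,c::int). (a,b,-c)) x) = l1 x" by (auto simp: l1_def split: prod.splits)
      show "\<And>x y. cheb ((\<lambda>(a::int,b::int,c::int). (a,b,-c)) x) ((\<lambda>(a::int,b::int,c::int). (a,b,-c)) y) = cheb x y"
        by (auto simp: cheb_def max.assoc max.commute max.left_commute abs_minus_commute split: prod.splits)
    qed (use True 2 s u in \<open>auto\<close>)
  next
    case 3
    show ?thesis
    proof (rule core[of "\<lambda>(a::int,b::int,c::int). (c,a,b)" n u "y" "z" "x"])
      show "inj (\<lambda>(a::int,b::int,c::int). (c,a,b))" by (auto simp: inj_def)
      show "surj (\<lambda>(a::int,b::int,c::int). (c,a,b))" by (rule surjI[where f="\<lambda>(a::int,b::int,c::int). (b,c,a)"]) auto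
      show "\<And>x. l1 ((\<lambda>(a::int,b::int,c::int). (c,a,b)) x) = l1 x" by (auto simp: l1_def split: prod.splits)
      show "\<And>x y. cheb ((\<lambda>(a::int,b::int,c::int). (c,a,b)) x) ((\<lambda>(a::int,b::int,c::int). (c,a,b)) y) = cheb x y"
        by (auto simp: cheb_def max.assoc max.commute max.left_commute abs_minus_commute split: prod.splits)
    qed (use True 3 s u in \<open>auto\<close>)
  next
    case 4
    show ?thesis
    proof (rule core[of "\<lambda>(a::int,b::int,c::int). (-c,a,b)" n u "y" "z" "-x"])
      show "inj (\<lambda>(a::int,b::int,c::int). (-c,a,b))" by (auto simp: inj_def)
      show "surj (\<lambda>(a::int,b::int,c::int). (-c,a,b))" by (rule surjI[where f="\<lambda>(a::int,b::int,c::int). (b,c,-a)"]) auto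
      show "\<And>x. l1 ((\<lambda>(a::int,b::int,c::int). (-c,a,b)) x) = l1 x" by (auto simp: l1_def split: prod.splits)
      show "\<And>x y. cheb ((\<lambda>(a::int,b::int,c::int). (-c,a,b)) x) ((\<lambda>(a::int,b::int,c::int). (-c,a,b)) y) = cheb x y"
        by (auto simp: cheb_def max.assoc max.commute max.left_commute abs_minus_commute split: prod.splits)
    qed (use True 4 s u in \<open>auto\<close>)
  next
    case 5
    show ?thesis
    proof (rule core[of "\<lambda>(a::int,b::int,c::int). (a,c,b)" n u "x" "z" "y"])
      show "inj (\<lambda>(a::int,b::int,c::int). (a,c,b))" by (auto simp: inj_def)
      show "surj (\<lambda>(a::int,b::int,c::int). (a,c,b))" by (rule surjI[where f="\<lambda>(a::int,b::int,c::int). (a,c,b)"]) auto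
      show "\<And>x. l1 ((\<lambda>(a::int,b::int,c::int). (a,c,b)) x) = l1 x" by (auto simp: l1_def split: prod.splits)
      show "\<And>x y. cheb ((\<lambda>(a::int,b::int,c::int). (a,c,b)) x) ((\<lambda>(a::int,b::int,c::int). (a,c,b)) y) = cheb x y"
        by (auto simp: cheb_def max.assoc max.commute max.left_commute abs_minus_commute split: prod.splits)
    qed (use True 5 s u in \<open>auto\<close>)
  next
    case 6
    show ?thesis
    proof (rule core[of "\<lambda>(a::int,b::int,c::int). (a,-c,b)" n u "x" "z" "-y"])
      show "inj (\<lambda>(a::int,b::int,c::int). (a,-c,b))" by (auto simp: inj_def)
      show "surj (\<lambda>(a::int,b::int,c::int). (a,-c,b))" by (rule surjI[where f="\<lambda>(a::int,b::int,c::int). (a,c,-b)"]) auto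
      show "\<And>x. l1 ((\<lambda>(a::int,b::int,c::int). (a,-c,b)) x) = l1 x" by (auto simp: l1_def split: prod.splits)
      show "\<And>x y. cheb ((\<lambda>(a::int,b::int,c::int). (a,-c,b)) x) ((\<lambda>(a::int,b::int,c::int). (a,-c,b)) y) = cheb x y"
        by (auto simp: cheb_def max.assoc max.commute max.left_commute abs_minus_commute split: prod.splits)
    qed (use True 6 s u in \<open>auto\<close>)
  qed
qed

end
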